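(* Let $p$ be a prime and $q=p^r$. Suppose there is an integer $b$ with $1<b<p-1$ and $\gcd(b,q-1)=1$. Then for every $n\ge 1$ there exists a local permutation polynomial $F\in\mathbb{F}_p[x_1,\dots,x_n]$ (viewed over $\mathbb{F}_q$) of degree $n(q-2)$.
   Context: $\mathbb{F}_q$ is the finite field with $q=p^r$ elements. A polynomial $f\in\mathbb{F}_q[x_1,\dots,x_n]$ is a local permutation polynomial (LPP) if, for each $i$ and each choice of the other coordinates $(a_j)_{j\ne i}\in\mathbb{F}_q^{n-1}$, the univariate polynomial in $x_i$ obtained by fixing $x_j=a_j$ for $j\ne i$ induces a bijection of $\mathbb{F}_q$. Polynomials are reduced (degree $<q$ in each variable), and degree means total degree. *)

theory Defs
  imports "HOL-Computational_Algebra.Primes"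
begin

text \<open>A polynomial in x_0,...,x_{n-1} over a field, reduced w.r.t. q (degree < q in each
variable), is represented by its coefficient function on exponent vectors.\<close>

definition exp_box :: "nat \<Rightarrow> nat \<Rightarrow> (nat \<Rightarrow> nat) set" where
  "exp_box n q = {e. (\<forall>i<n. e i < q) \<and> (\<forall>i\<ge>n. e i = 0)}"

definition reduced_mpoly :: "nat \<Rightarrow> nat \<Rightarrow> ((nat \<Rightarrow> nat) \<Rightarrow> 'a::zero) \<Rightarrow> bool" where
  "reduced_mpoly n q c \<longleftrightarrow> (\<forall>e. c e \<noteq> 0 \<longrightarrow> e \<in> exp_box n q)"

definition mpoly_eval :: "nat \<Rightarrow> nat \<Rightarrow> ((nat \<Rightarrow> nat) \<Rightarrow> 'a::comm_ring_1) \<Rightarrow> (nat \<Rightarrow> 'a) \<Rightarrow> 'a" where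
  "mpoly_eval n q c x = (\<Sum>e\<in>exp_box n q. c e * (\<Prod>i<n. x i ^ e i))"

definition mpoly_total_degree :: "nat \<Rightarrow> nat \<Rightarrow> ((nat \<Rightarrow> nat) \<Rightarrow> 'a::zero) \<Rightarrow> nat" where
  "mpoly_total_degree n q c = Max ((\<lambda>e. \<Sum>i<n. e i) ` {e \<in> exp_box n q. c e \<noteq> 0})"

definition is_LPP :: "nat \<Rightarrow> nat \<Rightarrow> ((nat \<Rightarrow> nat) \<Rightarrow> 'a::comm_ring_1) \<Rightarrow> bool" where
  "is_LPP n q c \<longleftrightarrow> (\<forall>i<n. \<forall>a :: nat \<Rightarrow> 'a. bij (\<lambda>t. mpoly_eval n q c (a(i := t))))"

end

theory Submission
  imports Defs "HOL-Number_Theory.Residues" "HOL-Computational_Algebra.Polynomial" "HOL-Library.Cardinality"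
begin

lemma ff_pow_card:
  fixes x :: "'a::{finite,field}"
  shows "x ^ CARD('a) = x"
proof (cases "x = 0")
  case False
  have "x * (\<Prod>y\<in>UNIV-{0}. x * y) = x * x ^ (CARD('a) - 1) * \<Prod>(UNIV-{0})"
    by (simp add: prod.distrib mult_ac)
  also have "x * x ^ (CARD('a) - 1) = x ^ Suc (CARD('a) - 1)"
    by (simp only: power_Suc)
  also have "Suc (CARD('a) - 1) = CARD('a)"
    using finite_UNIV_card_ge_0[where ?'a = 'a] by simp
  also have "(\<Prod>y\<in>UNIV-{0}. x * y) = (\<Prod>y\<in>UNIV-{0}. y)"
    by (rule prod.reindex_bij_witness[of _ "\<lambda>y. y / x" "\<lambda>y. x * y"]) (use False in auto)
  finally show ?thesis
    by simp
qed (use finite_UNIV_card_ge_0[where ?'a = 'a] in auto)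

lemma ff_card_ge2: "CARD('a::{finite,field}) \<ge> 2"
proof -
  have "{0::'a, 1} \<subseteq> UNIV" by auto
  hence "card {0::'a,1} \<le> CARD('a)" by (intro card_mono) auto
  thus ?thesis by simp
qed

lemma ff_pow_card1:
  fixes x :: "'a::{finite,field}"
  assumes "x \<noteq> 0" shows "x ^ (CARD('a) - 1) = 1"
proof -
  have "x * x ^ (CARD('a) - 1) = x ^ Suc (CARD('a) - 1)" by (simp only: power_Suc)
  also have "Suc (CARD('a) - 1) = CARD('a)" using ff_card_ge2[where 'a='a] by simp
  finally have "x * x ^ (CARD('a) - 1) = x * 1" using ff_pow_card[of x] by simp
  thus ?thesis using assms by simp
qed

lemma ff_powmod:
  fixes x :: "'a::{finite,field}"
  assumes "m \<ge> 1" shows "x ^ (m + k * (CARD('a) - 1)) = x ^ m"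
proof (cases "x = 0")
  case True thus ?thesis using assms by (simp add: power_0_left)
next
  case False
  have "x ^ (m + k * (CARD('a) - 1)) = x ^ m * (x ^ (CARD('a) - 1)) ^ k"
    by (metis power_add power_mult mult.commute)
  thus ?thesis using ff_pow_card1[OF False] by simp
qed

lemma ff_of_nat_card: "of_nat CARD('a::{finite,field}) = (0::'a)"
  using CHAR_dvd_CARD[where 'a='a] of_nat_eq_0_iff_char_dvd by blast

lemma ff_psum_card1: "(\<Sum>s\<in>(UNIV::'a::{finite,field} set). s ^ (CARD('a) - 1)) = -1"
proof -
  have "(\<Sum>s\<in>(UNIV::'a set). s ^ (CARD('a) - 1)) = (\<Sum>s\<in>(UNIV::'a set). if s = 0 then 0 else 1)"
    using ff_card_ge2[where 'a='a] by (intro sum.cong) (auto simp: ff_pow_card1[simplified])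
  also have "\<dots> = (\<Sum>s\<in>UNIV - {0::'a}. 1)"
    by (rule sum.mono_neutral_cong_right) auto
  also have "\<dots> = of_nat (card (UNIV - {0::'a}))" by simp
  also have "card (UNIV - {0::'a}) = CARD('a) - 1" by (simp add: card_Diff_singleton)
  also have "(of_nat (CARD('a) - 1) :: 'a) = of_nat CARD('a) - 1"
    using ff_card_ge2[where 'a='a] by (simp add: of_nat_diff)
  finally show ?thesis by (simp add: ff_of_nat_card)
qed

lemma ff_psum_small:
  assumes "1 \<le> k" "k < CARD('a::{finite,field}) - 1"
  shows "(\<Sum>s\<in>(UNIV::'a set). s ^ k) = 0"
proof -
  define pp :: "'a poly" where "pp = monom 1 k - 1"
  have dp: "degree pp \<le> k" unfolding pp_def by (intro degree_diff_le) (auto simp: degree_monom_le)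
  have "poly pp 0 \<noteq> 0" using assms by (simp add: pp_def poly_monom power_0_left)
  hence "pp \<noteq> 0" by auto
  hence "card {x. poly pp x = 0} \<le> k" using card_poly_roots_bound dp le_trans by metis
  moreover have "{x. poly pp x = 0} = {x. x ^ k = 1}" by (auto simp: pp_def poly_monom)
  ultimately have ck: "card {x::'a. x ^ k = 1} < card (UNIV - {0::'a})"
    using assms by (simp add: card_Diff_singleton)
  have "\<not> (UNIV - {0::'a}) \<subseteq> {x. x ^ k = 1}"
  proof
    assume "UNIV - {0::'a} \<subseteq> {x. x ^ k = 1}"
    hence "card (UNIV - {0::'a}) \<le> card {x::'a. x ^ k = 1}" by (intro card_mono) auto
    with ck show False by simp
  qed
  then obtain c :: 'a where c: "c \<noteq> 0" "c ^ k \<noteq> 1" by auto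
  have "(\<Sum>s\<in>(UNIV::'a set). s ^ k) = (\<Sum>s\<in>(UNIV::'a set). (c * s) ^ k)"
    by (rule sum.reindex_bij_witness[of _ "\<lambda>y. c * y" "\<lambda>y. y / c"]) (use c in auto)
  also have "\<dots> = c ^ k * (\<Sum>s\<in>(UNIV::'a set). s ^ k)"
    by (simp add: power_mult_distrib sum_distrib_left)
  finally have "(1 - c ^ k) * (\<Sum>s\<in>(UNIV::'a set). s ^ k) = 0" by (simp add: algebra_simps)
  thus ?thesis using c by simp
qed

lemma ff_psum:
  assumes "1 \<le> k"
  shows "(\<Sum>s\<in>(UNIV::'a::{finite,field} set). s ^ k) = (if (CARD('a) - 1) dvd k then -1 else 0)"
proof -
  let ?Q = "CARD('a) - 1"
  have Q1: "?Q \<ge> 1" using ff_card_ge2[where 'a='a] by simp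
  show ?thesis
  proof (cases "?Q dvd k")
    case True
    then obtain t where t: "k = ?Q * t" by auto
    with assms have "t \<ge> 1" by (cases t) auto
    then have "k = ?Q + (t - 1) * ?Q" using t by (cases t) (auto simp: algebra_simps)
    hence "\<And>s::'a. s ^ k = s ^ ?Q" using ff_powmod[of ?Q] Q1 by metis
    thus ?thesis using True ff_psum_card1[where 'a='a] by simp
  next
    case False
    have km: "k = k mod ?Q + (k div ?Q) * ?Q" by (metis mod_div_mult_eq)
    have m1: "k mod ?Q \<ge> 1" using False by (metis dvd_eq_mod_eq_0 less_one not_le)
    have "\<And>s::'a. s ^ k = s ^ (k mod ?Q)" using ff_powmod[OF m1] km by metis
    moreover have "k mod ?Q < ?Q" using Q1 by simp
    ultimately show ?thesis using False ff_psum_small[OF m1] by simp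
  qed
qed


definition iota :: "'a::{finite,field} \<Rightarrow> 'a" where "iota z = z ^ (CARD('a) - 2)"

lemma iota_iota:
  assumes "CARD('a::{finite,field}) \<ge> 3" shows "iota (iota (z::'a)) = z"
proof -
  obtain m where m: "CARD('a) = m + 3" using assms by (metis add.commute le_Suc_ex)
  have e: "(CARD('a) - 2) * (CARD('a) - 2) = 1 + m * (CARD('a) - 1)"
    using m by (simp add: algebra_simps)
  have "iota (iota z) = z ^ ((CARD('a) - 2) * (CARD('a) - 2))"
    by (simp add: iota_def power_mult)
  also have "\<dots> = z" by (simp only: e ff_powmod[of 1 z m]) simp
  finally show ?thesis .
qed

lemma iota_bij: assumes "CARD('a::{finite,field}) \<ge> 3" shows "bij (iota :: 'a \<Rightarrow> 'a)"
  by (metis assms bij_betw_def inj_on_inverseI iota_iota surj_def)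

lemma psum_shift:
  assumes Q: "CARD('a::{finite,field}) \<ge> 3" and i: "i \<le> CARD('a) - 1"
  shows "(\<Sum>s\<in>(UNIV::'a set). s ^ (i + (CARD('a) - 2))) = (if i = 1 then -1 else 0)"
proof -
  have k1: "1 \<le> i + (CARD('a) - 2)" using Q by simp
  have "(CARD('a) - 1) dvd (i + (CARD('a) - 2)) \<longleftrightarrow> i = 1"
  proof
    assume d: "(CARD('a) - 1) dvd (i + (CARD('a) - 2))"
    show "i = 1"
    proof (cases "i = 0")
      case True
      hence "(CARD('a) - 1) dvd (CARD('a) - 2)" using d by simp
      moreover have "0 < CARD('a) - 2" "CARD('a) - 2 < CARD('a) - 1" using Q by auto
      ultimately show ?thesis using nat_dvd_not_less by blast
    next
      case False
      have eq: "i + (CARD('a) - 2) = (i - 1) + (CARD('a) - 1)" using False Q by simp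
      have "(CARD('a) - 1) dvd (i - 1)" using d unfolding eq by (simp only: dvd_add_triv_right_iff)
      moreover have "i - 1 < CARD('a) - 1" using i Q False by simp
      ultimately have "i - 1 = 0" by (metis dvd_imp_le le_neq_implies_less linorder_not_le neq0_conv)
      thus ?thesis using False by simp
    qed
  next
    assume "i = 1"
    hence "i + (CARD('a) - 2) = CARD('a) - 1" using Q by simp
    thus "(CARD('a) - 1) dvd (i + (CARD('a) - 2))" by simp
  qed
  thus ?thesis using ff_psum[OF k1, where 'a='a] by simp
qed

lemma key_sum:
  assumes Q: "CARD('a::{finite,field}) \<ge> 3" and j: "1 \<le> j" "j \<le> CARD('a) - 1"
  shows "(\<Sum>t\<in>(UNIV::'a set). (c + iota t) ^ j * t) = - of_nat j * c ^ (j - 1)"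
proof -
  have "(\<Sum>t\<in>(UNIV::'a set). (c + iota t) ^ j * t) = (\<Sum>s\<in>(UNIV::'a set). (c + s) ^ j * iota s)"
    by (rule sum.reindex_bij_witness[of _ iota iota]) (auto simp: iota_iota[OF Q])
  also have "\<dots> = (\<Sum>s\<in>(UNIV::'a set). \<Sum>i\<le>j. of_nat (j choose i) * c ^ (j - i) * s ^ (i + (CARD('a) - 2)))"
  proof (intro sum.cong refl)
    fix s :: 'a
    have "(c + s) ^ j = (\<Sum>i\<le>j. of_nat (j choose i) * s ^ i * c ^ (j - i))"
      using binomial_ring[of s c j] by (simp add: add.commute)
    thus "(c + s) ^ j * iota s = (\<Sum>i\<le>j. of_nat (j choose i) * c ^ (j - i) * s ^ (i + (CARD('a) - 2)))"
      by (simp add: sum_distrib_right sum_distrib_left iota_def power_add mult_ac)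
  qed
  also have "\<dots> = (\<Sum>i\<le>j. of_nat (j choose i) * c ^ (j - i) * (\<Sum>s\<in>(UNIV::'a set). s ^ (i + (CARD('a) - 2))))"
    by (subst sum.swap) (simp add: sum_distrib_left)
  also have "\<dots> = (\<Sum>i\<le>j. if i = 1 then - (of_nat (j choose i) * c ^ (j - i)) else 0)"
  proof (intro sum.cong refl)
    fix i assume "i \<in> {..j}"
    hence "i \<le> CARD('a) - 1" using j by simp
    from psum_shift[OF Q this] show "of_nat (j choose i) * c ^ (j - i) * (\<Sum>s\<in>(UNIV::'a set). s ^ (i + (CARD('a) - 2))) =
      (if i = 1 then - (of_nat (j choose i) * c ^ (j - i)) else 0)" by simp
  qed
  also have "\<dots> = - of_nat j * c ^ (j - 1)"
    using j by (simp add: sum.delta)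
  finally show ?thesis .
qed


definition Aset :: "nat \<Rightarrow> (nat \<Rightarrow> 'a::zero) set" where "Aset m = {a. \<forall>i\<ge>m. a i = 0}"

lemma split_coord:
  assumes "j < m"
  shows "sum g (Aset m) = (\<Sum>a\<in>{a\<in>Aset m. a j = 0}. \<Sum>t\<in>UNIV. g (a(j:=t)))"
proof -
  have "(\<Sum>a\<in>{a\<in>Aset m. a j = 0}. \<Sum>t\<in>UNIV. g (a(j:=t)))
      = (\<Sum>(a,t)\<in>{a\<in>Aset m. a j = 0} \<times> UNIV. g (a(j:=t)))"
    by (rule sum.cartesian_product)
  also have "\<dots> = sum g (Aset m)"
    by (rule sum.reindex_bij_witness[of _ "\<lambda>b. (b(j:=0), b j)" "\<lambda>(a,t). a(j:=t)"])
       (use assms in \<open>auto simp: Aset_def\<close>)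
  finally show ?thesis by simp
qed

lemma Aset_Suc_zero: "{a\<in>Aset (Suc m). a m = 0} = Aset m"
  unfolding Aset_def by (auto simp: le_Suc_eq) (metis Suc_leI le_neq_implies_less)

lemma Aset_0: "Aset 0 = {\<lambda>_. 0}"
  by (auto simp: Aset_def)

lemma finite_Aset: "finite (Aset m :: (nat \<Rightarrow> 'a::{finite,zero}) set)"
proof (induction m)
  case 0 thus ?case by (simp add: Aset_0)
next
  case (Suc m)
  have "Aset (Suc m) \<subseteq> (\<lambda>(a,t). a(m:=t)) ` (Aset m \<times> (UNIV :: 'a set))"
  proof
    fix b :: "nat \<Rightarrow> 'a" assume "b \<in> Aset (Suc m)"
    hence "b = (\<lambda>(a,t). a(m:=t)) (b(m:=0), b m)" "b(m:=0) \<in> Aset m"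
      by (auto simp: Aset_def le_Suc_eq)
    thus "b \<in> (\<lambda>(a,t). a(m:=t)) ` (Aset m \<times> (UNIV :: 'a set))" by blast
  qed
  thus ?case using Suc by (meson finite_SigmaI finite_class.finite_UNIV finite_imageI finite_subset)
qed

fun Pp :: "nat \<Rightarrow> (nat \<Rightarrow> 'a::{finite,field}) \<Rightarrow> 'a" where
  "Pp 0 a = 1"
| "Pp (Suc m) a = iota (Pp m a) + iota (a m)"

lemma Pp_local: "(\<forall>i<m. a i = a' i) \<Longrightarrow> Pp m a = Pp m a'"
  by (induction m) auto

definition TT :: "nat \<Rightarrow> nat \<Rightarrow> 'a::{finite,field}" where
  "TT j m = (\<Sum>a\<in>Aset m. Pp m a ^ j * (\<Prod>i<m. a i))"

lemma TT_step:
  assumes Q: "CARD('a::{finite,field}) \<ge> 3" and j: "1 \<le> j" "j \<le> CARD('a) - 1"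
  shows "(TT j (Suc m) :: 'a) = - of_nat j * TT ((CARD('a) - 2) * (j - 1)) m"
proof -
  have "(TT j (Suc m) :: 'a) = (\<Sum>a\<in>Aset m. \<Sum>t\<in>UNIV. Pp (Suc m) (a(m:=t)) ^ j * (\<Prod>i<Suc m. (a(m:=t)) i))"
    unfolding TT_def by (subst split_coord[of m "Suc m"]) (auto simp: Aset_Suc_zero)
  also have "\<dots> = (\<Sum>a\<in>Aset m. (\<Prod>i<m. a i) * (\<Sum>t\<in>UNIV. (iota (Pp m a) + iota t) ^ j * t))"
  proof (intro sum.cong refl)
    fix a :: "nat \<Rightarrow> 'a" assume "a \<in> Aset m"
    have "\<And>t. Pp m (a(m:=t)) = Pp m a" by (rule Pp_local) auto
    moreover have "\<And>t. (\<Prod>i<Suc m. (a(m:=t)) i) = (\<Prod>i<m. a i) * t"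
      by (simp add: prod.lessThan_Suc)
    ultimately show "(\<Sum>t\<in>UNIV. Pp (Suc m) (a(m:=t)) ^ j * (\<Prod>i<Suc m. (a(m:=t)) i))
       = (\<Prod>i<m. a i) * (\<Sum>t\<in>UNIV. (iota (Pp m a) + iota t) ^ j * t)"
      by (simp add: sum_distrib_left mult_ac)
  qed
  also have "\<dots> = (\<Sum>a\<in>Aset m. (\<Prod>i<m. a i) * (- of_nat j * Pp m a ^ ((CARD('a) - 2) * (j - 1))))"
  proof (intro sum.cong refl)
    fix a :: "nat \<Rightarrow> 'a"
    have "(\<Sum>t\<in>UNIV. (iota (Pp m a) + iota t) ^ j * t) = - of_nat j * (iota (Pp m a)) ^ (j - 1)"
      by (rule key_sum[OF Q j])
    also have "(iota (Pp m a)) ^ (j - 1) = Pp m a ^ ((CARD('a) - 2) * (j - 1))"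
      by (simp add: iota_def power_mult)
    finally show "(\<Prod>i<m. a i) * (\<Sum>t\<in>UNIV. (iota (Pp m a) + iota t) ^ j * t) =
         (\<Prod>i<m. a i) * (- of_nat j * Pp m a ^ ((CARD('a) - 2) * (j - 1)))" by simp
  qed
  also have "\<dots> = - of_nat j * TT ((CARD('a) - 2) * (j - 1)) m"
    unfolding TT_def by (simp add: sum_distrib_left mult_ac)
  finally show ?thesis .
qed

lemma TT_cong: "m1 \<ge> 1 \<Longrightarrow> (TT (m1 + k * (CARD('a) - 1)) m :: 'a::{finite,field}) = TT m1 m"
  unfolding TT_def using ff_powmod[of m1 _ k, where 'a='a] by simp

lemma TT_nonzero:
  assumes Q: "CARD('a::{finite,field}) \<ge> 3" and b: "2 \<le> b" "b + 2 \<le> CARD('a)"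
    and bn: "(of_nat b :: 'a) \<noteq> 0"
  shows "(TT b m :: 'a) \<noteq> 0 \<and> (TT (CARD('a) - b) m :: 'a) \<noteq> 0"
proof (induction m)
  case 0 thus ?case by (simp add: TT_def Aset_0)
next
  case (Suc m)
  obtain e where e: "b = e + 2" using b by (metis add.commute le_Suc_ex)
  obtain f where f: "CARD('a) = b + f + 2" using b by (metis add.commute add.assoc le_Suc_ex)
  have nb': "(of_nat (CARD('a) - b) :: 'a) \<noteq> 0"
  proof -
    have "(of_nat (CARD('a) - b) :: 'a) = of_nat CARD('a) - of_nat b"
      using b by (simp add: of_nat_diff)
    thus ?thesis using bn by (simp add: ff_of_nat_card)
  qed
  have i1: "(CARD('a) - 2) * (b - 1) = (CARD('a) - b) + e * (CARD('a) - 1)"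
    using e f by (simp add: algebra_simps)
  have i2: "(CARD('a) - 2) * (CARD('a) - b - 1) = b + f * (CARD('a) - 1)"
    using e f by (simp add: algebra_simps)
  have s1: "(TT b (Suc m) :: 'a) = - of_nat b * TT (CARD('a) - b) m"
  proof -
    have "(TT b (Suc m) :: 'a) = - of_nat b * TT ((CARD('a) - 2) * (b - 1)) m"
      by (rule TT_step[OF Q]) (use b in auto)
    also have "(TT ((CARD('a) - 2) * (b - 1)) m :: 'a) = TT (CARD('a) - b) m"
      unfolding i1 by (rule TT_cong) (use b in auto)
    finally show ?thesis .
  qed
  have s2: "(TT (CARD('a) - b) (Suc m) :: 'a) = - of_nat (CARD('a) - b) * TT b m"
  proof -
    have "(TT (CARD('a) - b) (Suc m) :: 'a) = - of_nat (CARD('a) - b) * TT ((CARD('a) - 2) * (CARD('a) - b - 1)) m"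
      by (rule TT_step[OF Q]) (use b in auto)
    also have "(TT ((CARD('a) - 2) * (CARD('a) - b - 1)) m :: 'a) = TT b m"
      unfolding i2 by (rule TT_cong) (use b in auto)
    finally show ?thesis .
  qed
  show ?case using s1 s2 Suc bn nb' by simp
qed


definition wcoef :: "nat \<Rightarrow> 'a::{finite,field} \<Rightarrow> 'a" where
  "wcoef k t = (if k = 0 then 1 else 0) - t ^ (CARD('a) - 1 - k)"

definition coef :: "nat \<Rightarrow> ((nat \<Rightarrow> 'a::{finite,field}) \<Rightarrow> 'a) \<Rightarrow> (nat \<Rightarrow> nat) \<Rightarrow> 'a" where
  "coef n F e = (if e \<in> exp_box n CARD('a) then (\<Sum>a\<in>Aset n. F a * (\<Prod>i<n. wcoef (e i) (a i))) else 0)"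

lemma delta_sum:
  fixes x a :: "'a::{finite,field}"
  shows "(\<Sum>k<CARD('a). wcoef k a * x ^ k) = (if x = a then 1 else 0)"
proof -
  let ?Q = "CARD('a)"
  have Q0: "?Q > 0" by simp
  have "(\<Sum>k<?Q. wcoef k a * x ^ k) = (\<Sum>k<?Q. (if k = 0 then 1 else 0) - a ^ (?Q - Suc k) * x ^ k)"
    unfolding wcoef_def by (intro sum.cong) (auto simp: left_diff_distrib)
  also have "\<dots> = (\<Sum>k<?Q. (if k = 0 then 1 else 0)) - (\<Sum>k<?Q. a ^ (?Q - Suc k) * x ^ k)"
    by (simp only: sum_subtractf)
  also have "(\<Sum>k<?Q. (if k = 0 then 1 else 0) :: 'a) = 1" using Q0 by (simp add: sum.delta)
  finally have eq: "(\<Sum>k<?Q. wcoef k a * x ^ k) = 1 - (\<Sum>k<?Q. a ^ (?Q - Suc k) * x ^ k)" .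
  show ?thesis
  proof (cases "x = a")
    case True
    have "(\<Sum>k<?Q. a ^ (?Q - Suc k) * x ^ k) = (\<Sum>k<?Q. a ^ (?Q - 1))"
      using True by (intro sum.cong refl) (auto simp flip: power_add)
    also have "\<dots> = 0" by (simp add: ff_of_nat_card)
    finally show ?thesis using eq True by simp
  next
    case False
    have "x ^ ?Q - a ^ ?Q = (x - a) * (\<Sum>k<?Q. a ^ (?Q - Suc k) * x ^ k)"
      by (rule power_diff_sumr2)
    hence "(x - a) * 1 = (x - a) * (\<Sum>k<?Q. a ^ (?Q - Suc k) * x ^ k)"
      by (simp add: ff_pow_card)
    hence "(\<Sum>k<?Q. a ^ (?Q - Suc k) * x ^ k) = 1" using False by simp
    thus ?thesis using eq False by simp
  qed
qed

lemma exp_box_0: "exp_box 0 q = {\<lambda>_. 0}"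
  by (auto simp: exp_box_def)

lemma exp_box_split:
  "sum g (exp_box (Suc n) q) = (\<Sum>e\<in>exp_box n q. \<Sum>k<q. g (e(n:=k)))"
proof -
  have "(\<Sum>e\<in>exp_box n q. \<Sum>k<q. g (e(n:=k))) = (\<Sum>(e,k)\<in>exp_box n q \<times> {..<q}. g (e(n:=k)))"
    by (rule sum.cartesian_product)
  also have "\<dots> = sum g (exp_box (Suc n) q)"
    by (rule sum.reindex_bij_witness[of _ "\<lambda>b. (b(n:=0), b n)" "\<lambda>(e,k). e(n:=k)"])
       (auto simp: exp_box_def less_Suc_eq le_Suc_eq)
  finally show ?thesis by simp
qed

lemma finite_exp_box: "finite (exp_box n q)"
proof (induction n)
  case 0 thus ?case by (simp add: exp_box_0)
next
  case (Suc n)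
  have "exp_box (Suc n) q \<subseteq> (\<lambda>(e,k). e(n:=k)) ` (exp_box n q \<times> {..<q})"
  proof
    fix b assume "b \<in> exp_box (Suc n) q"
    hence "b = (\<lambda>(e,k). e(n:=k)) (b(n:=0), b n)" "(b(n:=0), b n) \<in> exp_box n q \<times> {..<q}"
      by (auto simp: exp_box_def le_Suc_eq)
    thus "b \<in> (\<lambda>(e,k). e(n:=k)) ` (exp_box n q \<times> {..<q})" by blast
  qed
  thus ?case using Suc by (meson finite_SigmaI finite_lessThan finite_imageI finite_subset)
qed

lemma prod_sum_box:
  fixes f :: "nat \<Rightarrow> nat \<Rightarrow> 'a::comm_ring_1"
  shows "(\<Prod>i<n. \<Sum>k<q. f i k) = (\<Sum>e\<in>exp_box n q. \<Prod>i<n. f i (e i))"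
proof (induction n)
  case 0 thus ?case by (simp add: exp_box_0)
next
  case (Suc n)
  have "(\<Prod>i<Suc n. \<Sum>k<q. f i k) = (\<Sum>e\<in>exp_box n q. \<Prod>i<n. f i (e i)) * (\<Sum>k<q. f n k)"
    by (simp add: Suc)
  also have "\<dots> = (\<Sum>e\<in>exp_box n q. \<Sum>k<q. (\<Prod>i<n. f i (e i)) * f n k)"
    unfolding sum_distrib_right by (intro sum.cong refl) (simp add: sum_distrib_left)
  also have "\<dots> = (\<Sum>e\<in>exp_box n q. \<Sum>k<q. \<Prod>i<Suc n. f i ((e(n:=k)) i))"
    by (intro sum.cong refl) (simp add: prod.lessThan_Suc)
  also have "\<dots> = (\<Sum>e\<in>exp_box (Suc n) q. \<Prod>i<Suc n. f i (e i))"
    by (rule exp_box_split[symmetric])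
  finally show ?case .
qed

lemma prod_indicator:
  fixes x a :: "nat \<Rightarrow> 'a::field"
  shows "(\<Prod>i<n. if x i = a i then 1 else (0::'a)) = (if \<forall>i<n. x i = a i then 1 else 0)"
proof (cases "\<forall>i<n. x i = a i")
  case True thus ?thesis by simp
next
  case False
  then obtain i where "i < n" "x i \<noteq> a i" by auto
  thus ?thesis by (auto simp: prod_zero_iff)
qed

lemma coef_eval:
  fixes F :: "(nat \<Rightarrow> 'a::{finite,field}) \<Rightarrow> 'a"
  assumes loc: "\<And>x y. (\<forall>i<n. x i = y i) \<Longrightarrow> F x = F y"
  shows "mpoly_eval n CARD('a) (coef n F) x = F x"
proof -
  let ?Q = "CARD('a)"
  define xr where "xr = (\<lambda>i. if i < n then x i else 0)"
  have "mpoly_eval n ?Q (coef n F) x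
      = (\<Sum>e\<in>exp_box n ?Q. \<Sum>a\<in>Aset n. F a * (\<Prod>i<n. wcoef (e i) (a i) * x i ^ e i))"
    unfolding mpoly_eval_def coef_def
    by (intro sum.cong refl) (simp add: sum_distrib_left sum_distrib_right prod.distrib mult_ac)
  also have "\<dots> = (\<Sum>a\<in>Aset n. F a * (\<Sum>e\<in>exp_box n ?Q. \<Prod>i<n. wcoef (e i) (a i) * x i ^ e i))"
    by (subst sum.swap) (simp add: sum_distrib_left)
  also have "\<dots> = (\<Sum>a\<in>Aset n. F a * (\<Prod>i<n. \<Sum>k<?Q. wcoef k (a i) * x i ^ k))"
    by (simp add: prod_sum_box)
  also have "\<dots> = (\<Sum>a\<in>Aset n. F a * (\<Prod>i<n. if x i = a i then 1 else 0))"
    by (simp add: delta_sum)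
  also have "\<dots> = (\<Sum>a\<in>Aset n. if a = xr then F a else 0)"
  proof (intro sum.cong refl)
    fix a :: "nat \<Rightarrow> 'a" assume a: "a \<in> Aset n"
    have "(\<forall>i<n. x i = a i) \<longleftrightarrow> a = xr"
      using a by (auto simp: xr_def Aset_def fun_eq_iff)
    thus "F a * (\<Prod>i<n. if x i = a i then 1 else 0) = (if a = xr then F a else 0)"
      by (simp add: prod_indicator)
  qed
  also have "\<dots> = F xr"
    using finite_Aset[where m=n and 'a='a] by (simp add: sum.delta' Aset_def xr_def)
  also have "F xr = F x" by (rule loc) (simp add: xr_def)
  finally show ?thesis .
qed

lemma coef_vanish:
  fixes F :: "(nat \<Rightarrow> 'a::{finite,field}) \<Rightarrow> 'a"
  assumes Q: "CARD('a) \<ge> 4" and j: "j < n" and bj: "\<And>a. bij (\<lambda>t. F (a(j:=t)))"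
    and ej: "e j = CARD('a) - 1"
  shows "coef n F e = 0"
proof (cases "e \<in> exp_box n CARD('a)")
  case False thus ?thesis by (simp add: coef_def)
next
  case True
  have s0: "(\<Sum>t\<in>(UNIV::'a set). t) = 0"
    using ff_psum[of 1, where 'a='a] Q by (simp add: nat_dvd_not_less)
  have "coef n F e = (\<Sum>a\<in>{a\<in>Aset n. a j = 0}. \<Sum>t\<in>UNIV. F (a(j:=t)) * (\<Prod>i<n. wcoef (e i) ((a(j:=t)) i)))"
    using True by (simp add: coef_def split_coord[OF j])
  also have "\<dots> = (\<Sum>a\<in>{a\<in>Aset n. a j = 0}. - (\<Prod>i\<in>{..<n}-{j}. wcoef (e i) (a i)) * (\<Sum>t\<in>UNIV. F (a(j:=t))))"
  proof (intro sum.cong refl)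
    fix a :: "nat \<Rightarrow> 'a"
    have w: "\<And>t::'a. wcoef (e j) t = -1" using ej Q by (simp add: wcoef_def)
    have "\<And>t. (\<Prod>i<n. wcoef (e i) ((a(j:=t)) i)) = wcoef (e j) t * (\<Prod>i\<in>{..<n}-{j}. wcoef (e i) ((a(j:=t)) i))"
      using j by (subst prod.remove[of _ j]) auto
    moreover have "\<And>t. (\<Prod>i\<in>{..<n}-{j}. wcoef (e i) ((a(j:=t)) i)) = (\<Prod>i\<in>{..<n}-{j}. wcoef (e i) (a i))"
      by (intro prod.cong refl) auto
    ultimately show "(\<Sum>t\<in>UNIV. F (a(j:=t)) * (\<Prod>i<n. wcoef (e i) ((a(j:=t)) i)))
        = - (\<Prod>i\<in>{..<n}-{j}. wcoef (e i) (a i)) * (\<Sum>t\<in>UNIV. F (a(j:=t)))"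
      by (simp add: w sum_distrib_left sum_distrib_right sum_negf mult_ac)
  qed
  also have "\<dots> = 0"
  proof (intro sum.neutral ballI)
    fix a :: "nat \<Rightarrow> 'a"
    have "(\<Sum>t\<in>UNIV. F (a(j:=t))) = (\<Sum>t\<in>(UNIV::'a set). t)"
      using sum.reindex_bij_betw[of "\<lambda>t. F (a(j:=t))" UNIV UNIV "\<lambda>t. t"] bj[of a] by (simp add: bij_def)
    thus "- (\<Prod>i\<in>{..<n}-{j}. wcoef (e i) (a i)) * (\<Sum>t\<in>UNIV. F (a(j:=t))) = 0" using s0 by simp
  qed
  finally show ?thesis .
qed


lemma ff_CHAR_prime: "prime CHAR('a::{finite,field})"
  by (rule prime_CHAR_semidom) (rule finite_imp_CHAR_pos, simp)

lemma frob_diff: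
  fixes x y :: "'a::{finite,field}"
  shows "(x - y) ^ CHAR('a) = x ^ CHAR('a) - y ^ CHAR('a)"
proof -
  have "x ^ CHAR('a) = ((x - y) + y) ^ CHAR('a)" by simp
  also have "\<dots> = (x - y) ^ CHAR('a) + y ^ CHAR('a)"
    by (rule freshmans_dream) (auto simp: ff_CHAR_prime)
  finally show ?thesis by simp
qed

lemma frob_inj: "inj (\<lambda>x::'a::{finite,field}. x ^ CHAR('a))"
proof (rule injI)
  fix x y :: 'a assume "x ^ CHAR('a) = y ^ CHAR('a)"
  hence "(x - y) ^ CHAR('a) = 0" by (simp add: frob_diff)
  thus "x = y" by simp
qed

lemma Pp_frob: "(Pp m a :: 'a::{finite,field}) ^ CHAR('a) = Pp m (\<lambda>i. a i ^ CHAR('a))"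
proof (induction m)
  case 0 thus ?case by simp
next
  case (Suc m)
  have iz: "\<And>z::'a. iota z ^ CHAR('a) = iota (z ^ CHAR('a))"
    by (simp add: iota_def flip: power_mult) (simp add: mult.commute)
  have "(Pp (Suc m) a) ^ CHAR('a) = iota (Pp m a) ^ CHAR('a) + iota (a m) ^ CHAR('a)"
    by (simp, rule freshmans_dream) (auto simp: ff_CHAR_prime)
  thus ?case using Suc by (simp add: iz)
qed

lemma wcoef_frob: "(wcoef k t :: 'a::{finite,field}) ^ CHAR('a) = wcoef k (t ^ CHAR('a))"
proof -
  have p0: "CHAR('a) > 0" using ff_CHAR_prime[where 'a='a] prime_gt_0_nat by blast
  have "(wcoef k t :: 'a) ^ CHAR('a) = (if k = 0 then 1 else 0) ^ CHAR('a) - (t ^ (CARD('a) - 1 - k)) ^ CHAR('a)"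
    unfolding wcoef_def by (rule frob_diff)
  also have "(if k = 0 then 1 else 0 :: 'a) ^ CHAR('a) = (if k = 0 then 1 else 0)" using p0 by simp
  also have "(t ^ (CARD('a) - 1 - k)) ^ CHAR('a) = (t ^ CHAR('a)) ^ (CARD('a) - 1 - k)"
    by (simp flip: power_mult) (simp add: mult.commute)
  finally show ?thesis by (simp add: wcoef_def)
qed

lemma coef_frob:
  fixes F :: "(nat \<Rightarrow> 'a::{finite,field}) \<Rightarrow> 'a"
  assumes FF: "\<And>a. F a ^ CHAR('a) = F (\<lambda>i. a i ^ CHAR('a))"
  shows "coef n F e ^ CHAR('a) = coef n F e"
proof (cases "e \<in> exp_box n CARD('a)")
  case False thus ?thesis using ff_CHAR_prime[where 'a='a] prime_gt_0_nat by (simp add: coef_def)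
next
  case True
  let ?p = "CHAR('a)"
  define fr where "fr = (\<lambda>x::'a. x ^ ?p)"
  define fi where "fi = inv_into UNIV fr"
  have inj: "inj fr" using frob_inj unfolding fr_def .
  have surj: "surj fr" using finite_UNIV_inj_surj[OF _ inj] by simp
  have p0: "?p > 0" using ff_CHAR_prime[where 'a='a] prime_gt_0_nat by blast
  have phi0: "fr 0 = 0" using p0 by (simp add: fr_def)
  have psi0: "fi 0 = 0" unfolding fi_def by (metis inj inv_f_f phi0)
  have pp: "\<And>x. fr (fi x) = x" unfolding fi_def by (meson surj surj_f_inv_f)
  have qq: "\<And>x. fi (fr x) = x" unfolding fi_def by (meson inj inv_f_f)
  have bij: "bij_betw (\<lambda>a i. fr (a i)) (Aset n) (Aset n)"
    by (rule bij_betw_byWitness[where f'="\<lambda>a i. fi (a i)"]) (auto simp: Aset_def pp qq phi0 psi0)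
  have "coef n F e ^ ?p = (\<Sum>a\<in>Aset n. F a ^ ?p * (\<Prod>i<n. wcoef (e i) (a i) ^ ?p))"
    using True unfolding coef_def
    by (simp add: freshmans_dream_sum ff_CHAR_prime power_mult_distrib prod_power_distrib)
  also have "\<dots> = (\<Sum>a\<in>Aset n. (\<lambda>a. F a * (\<Prod>i<n. wcoef (e i) (a i))) (\<lambda>i. fr (a i)))"
    by (simp add: FF wcoef_frob fr_def)
  also have "\<dots> = (\<Sum>a\<in>Aset n. F a * (\<Prod>i<n. wcoef (e i) (a i)))"
    by (rule sum.reindex_bij_betw[OF bij])
  finally show ?thesis using True by (simp add: coef_def)
qed

lemma frob_fixed_range:
  fixes x :: "'a::{finite,field}"
  assumes "x ^ CHAR('a) = x"
  shows "x \<in> range (of_nat :: nat \<Rightarrow> 'a)"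
proof -
  let ?p = "CHAR('a)"
  have pr: "prime ?p" by (rule ff_CHAR_prime)
  hence p2: "?p \<ge> 2" by (rule prime_ge_2_nat)
  define pp :: "'a poly" where "pp = monom 1 ?p - [:0, 1:]"
  define k where "k = ?p - 2"
  have k: "?p = Suc (Suc k)" unfolding k_def using p2 by linarith
  have "coeff pp ?p = 1" by (simp add: pp_def coeff_monom k)
  hence pp0: "pp \<noteq> 0" by auto
  have dp: "degree pp \<le> ?p" unfolding pp_def
    by (intro degree_diff_le) (use p2 in \<open>auto simp: degree_monom_le\<close>)
  define S where "S = {x::'a. x ^ ?p = x}"
  have "S = {x. poly pp x = 0}" by (auto simp: S_def pp_def poly_monom)
  hence cS: "card S \<le> ?p" using card_poly_roots_bound[OF pp0] dp by simp
  have ofp: "\<And>k. (of_nat k :: 'a) ^ ?p = of_nat k"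
  proof -
    fix k show "(of_nat k :: 'a) ^ ?p = of_nat k"
    proof (induction k)
      case 0 thus ?case using p2 by simp
    next
      case (Suc k)
      have "(of_nat (Suc k) :: 'a) ^ ?p = (of_nat k + 1) ^ ?p" by (simp add: add.commute)
      also have "\<dots> = of_nat k ^ ?p + 1 ^ ?p" by (rule freshmans_dream) (auto simp: pr)
      finally show ?case using Suc by simp
    qed
  qed
  have sub: "(of_nat ` {..<?p} :: 'a set) \<subseteq> S" using ofp by (auto simp: S_def)
  have inj: "inj_on (of_nat :: nat \<Rightarrow> 'a) {..<?p}"
  proof (rule inj_onI)
    fix u v assume "u \<in> {..<?p}" "v \<in> {..<?p}" "(of_nat u :: 'a) = of_nat v"
    thus "u = v" by (auto simp: of_nat_eq_iff_cong_CHAR cong_def)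
  qed
  have "card (of_nat ` {..<?p} :: 'a set) = ?p" using inj by (simp add: card_image)
  moreover have "card (of_nat ` {..<?p} :: 'a set) \<le> card S" by (rule card_mono[OF _ sub]) simp
  ultimately have "card (of_nat ` {..<?p} :: 'a set) = card S" using cS by simp
  hence "of_nat ` {..<?p} = S"
    using card_subset_eq[OF _ sub] by simp
  thus ?thesis using assms by (auto simp: S_def)
qed


lemma Pp_bij:
  assumes Q: "CARD('a::{finite,field}) \<ge> 3"
  shows "i < m \<Longrightarrow> bij (\<lambda>t. Pp m ((a::nat \<Rightarrow> 'a)(i:=t)))"
proof (induction m arbitrary: a)
  case 0 thus ?case by simp
next
  case (Suc m)
  have ib: "bij (iota :: 'a \<Rightarrow> 'a)" by (rule iota_bij[OF Q])
  have addb: "\<And>c::'a. bij (\<lambda>z. z + c)"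
  proof -
    fix c :: 'a
    have "inj (\<lambda>z::'a. z + c)" by (rule injI) simp
    thus "bij (\<lambda>z. z + c)" using finite_UNIV_inj_surj[of "\<lambda>z::'a. z + c"] by (simp add: bij_def)
  qed
  have addb': "\<And>c::'a. bij (\<lambda>z. c + z)"
  proof -
    fix c :: 'a
    have "inj (\<lambda>z::'a. c + z)" by (rule injI) simp
    thus "bij (\<lambda>z. c + z)" using finite_UNIV_inj_surj[of "\<lambda>z::'a. c + z"] by (simp add: bij_def)
  qed
  show ?case
  proof (cases "i = m")
    case True
    have eq: "(\<lambda>t. Pp (Suc m) (a(i:=t))) = (\<lambda>z. iota (Pp m a) + z) \<circ> iota"
    proof
      fix t
      have "Pp m (a(m:=t)) = Pp m a" by (rule Pp_local) auto
      thus "Pp (Suc m) (a(i:=t)) = ((\<lambda>z. iota (Pp m a) + z) \<circ> iota) t" using True by simp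
    qed
    show ?thesis unfolding eq by (rule bij_comp[OF ib addb'])
  next
    case False
    hence im: "i < m" using Suc by simp
    have eq: "(\<lambda>t. Pp (Suc m) (a(i:=t))) = (\<lambda>z. z + iota (a m)) \<circ> iota \<circ> (\<lambda>t. Pp m (a(i:=t)))"
      using False by (auto simp: fun_eq_iff)
    show ?thesis unfolding eq by (rule bij_comp[OF Suc.IH[OF im] bij_comp[OF ib addb]])
  qed
qed

lemma pow_bij:
  assumes cop: "coprime b (CARD('a::{finite,field}) - 1)" and b: "b \<noteq> 0"
  shows "bij (\<lambda>z::'a. z ^ b)"
proof -
  obtain u v where uv: "b * u = (CARD('a) - 1) * v + gcd b (CARD('a) - 1)"
    using bezout_nat[OF b] by blast
  hence uv': "b * u = 1 + v * (CARD('a) - 1)" using cop by (simp add: mult.commute)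
  have "\<And>z::'a. (z ^ b) ^ u = z"
  proof -
    fix z :: 'a
    have "(z ^ b) ^ u = z ^ (1 + v * (CARD('a) - 1))" by (simp only: power_mult[symmetric] uv')
    also have "\<dots> = z ^ 1" by (rule ff_powmod) simp
    finally show "(z ^ b) ^ u = z" by simp
  qed
  hence "inj (\<lambda>z::'a. z ^ b)" by (metis injI)
  thus ?thesis using finite_UNIV_inj_surj[of "\<lambda>z::'a. z ^ b"] by (simp add: bij_def)
qed

theorem mainTheorem11:
  fixes p r b n :: nat
  assumes "prime p"
    and "card (UNIV :: 'a::{finite,field} set) = p ^ r"
    and "1 < b" and "b < p - 1"
    and "coprime b (p ^ r - 1)"
    and "n \<ge> 1"
  shows "\<exists>c :: (nat \<Rightarrow> nat) \<Rightarrow> 'a.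
           reduced_mpoly n (p ^ r) c
         \<and> (\<forall>e. c e \<in> range (of_nat :: nat \<Rightarrow> 'a))
         \<and> is_LPP n (p ^ r) c
         \<and> mpoly_total_degree n (p ^ r) c = n * (p ^ r - 2)"
proof -
  note pr = assms(1)
  have Qeq: "CARD('a) = p ^ r" using assms(2) .
  have r0: "r \<noteq> 0" using ff_card_ge2[where 'a='a] Qeq by (cases r) auto
  have pQ: "p \<le> CARD('a)" using Qeq r0 pr
    by (metis One_nat_def Suc_leI neq0_conv power_increasing power_one_right prime_gt_0_nat)
  have bp: "b + 2 \<le> p" using assms(4) by simp
  have Q4: "CARD('a) \<ge> 4" using bp pQ assms(3) by simp
  hence Q3: "CARD('a) \<ge> 3" by simp
  have charp: "CHAR('a) = p"
  proof -
    have "CHAR('a) dvd p ^ r" using CHAR_dvd_CARD[where 'a='a] Qeq by simp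
    hence "CHAR('a) dvd p" using ff_CHAR_prime[where 'a='a] prime_dvd_power by blast
    thus ?thesis using ff_CHAR_prime[where 'a='a] pr by (simp add: primes_dvd_imp_eq)
  qed
  have bn: "(of_nat b :: 'a) \<noteq> 0"
  proof
    assume "(of_nat b :: 'a) = 0"
    hence "p dvd b" using of_nat_eq_0_iff_char_dvd charp by metis
    thus False using assms(3,4) by (simp add: nat_dvd_not_less)
  qed
  define F :: "(nat \<Rightarrow> 'a) \<Rightarrow> 'a" where "F = (\<lambda>a. Pp n a ^ b)"
  define c where "c = coef n F"
  have loc: "\<And>x y. (\<forall>i<n. x i = y i) \<Longrightarrow> F x = F y"
    unfolding F_def using Pp_local by metis
  have bijF: "\<And>i a. i < n \<Longrightarrow> bij (\<lambda>t. F (a(i:=t)))"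
  proof -
    fix i a assume "i < n"
    have "(\<lambda>t. F (a(i:=t))) = (\<lambda>z. z ^ b) \<circ> (\<lambda>t. Pp n (a(i:=t)))" by (auto simp: F_def)
    thus "bij (\<lambda>t. F (a(i:=t)))"
      using pow_bij[of b, where 'a='a] assms(3,5) Qeq Pp_bij[OF Q3 \<open>i < n\<close>] by (simp add: bij_comp)
  qed
  have red: "reduced_mpoly n (p ^ r) c"
    unfolding reduced_mpoly_def c_def coef_def Qeq[symmetric] by auto
  have rng: "\<forall>e. c e \<in> range (of_nat :: nat \<Rightarrow> 'a)"
  proof
    fix e
    have "\<And>a. F a ^ CHAR('a) = F (\<lambda>i. a i ^ CHAR('a))"
      unfolding F_def by (simp add: Pp_frob[symmetric] flip: power_mult) (simp add: mult.commute)
    hence "c e ^ CHAR('a) = c e" unfolding c_def by (rule coef_frob)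
    thus "c e \<in> range (of_nat :: nat \<Rightarrow> 'a)" by (rule frob_fixed_range)
  qed
  have lpp: "is_LPP n (p ^ r) c"
    unfolding is_LPP_def c_def Qeq[symmetric] using coef_eval[OF loc] bijF by simp
  define estar :: "nat \<Rightarrow> nat" where "estar = (\<lambda>i. if i < n then CARD('a) - 2 else 0)"
  have es_box: "estar \<in> exp_box n CARD('a)" by (auto simp: estar_def exp_box_def)
  have ces: "c estar \<noteq> 0"
  proof -
    have w: "\<And>t::'a. wcoef (CARD('a) - 2) t = - t"
    proof -
      fix t :: 'a
      have "CARD('a) - 1 - (CARD('a) - 2) = 1" using Q4 by simp
      thus "wcoef (CARD('a) - 2) t = - t" using Q4 by (simp add: wcoef_def)
    qed
    have "c estar = (\<Sum>a\<in>Aset n. Pp n a ^ b * (\<Prod>i<n. - a i))"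
      unfolding c_def coef_def F_def using es_box by (simp add: estar_def w)
    also have "\<dots> = (-1) ^ n * TT b n"
      by (simp add: prod_uminus TT_def sum_distrib_left mult_ac)
    finally show ?thesis using TT_nonzero[OF Q3 _ _ bn, of n] assms(3) bp pQ by simp
  qed
  have bound: "\<And>e. e \<in> exp_box n CARD('a) \<Longrightarrow> c e \<noteq> 0 \<Longrightarrow> (\<Sum>i<n. e i) \<le> n * (CARD('a) - 2)"
  proof -
    fix e assume eb: "e \<in> exp_box n CARD('a)" and ce: "c e \<noteq> 0"
    have "\<forall>i<n. e i \<le> CARD('a) - 2"
    proof (intro allI impI, rule ccontr)
      fix i assume i: "i < n" "\<not> e i \<le> CARD('a) - 2"
      with eb have "e i = CARD('a) - 1" by (auto simp: exp_box_def)
      hence "c e = 0" unfolding c_def by (rule coef_vanish[OF Q4 i(1) bijF[OF i(1)]])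
      with ce show False by simp
    qed
    hence "(\<Sum>i<n. e i) \<le> (\<Sum>i<n. CARD('a) - 2)" by (intro sum_mono) auto
    thus "(\<Sum>i<n. e i) \<le> n * (CARD('a) - 2)" by simp
  qed
  have deg: "mpoly_total_degree n (p ^ r) c = n * (p ^ r - 2)"
    unfolding mpoly_total_degree_def Qeq[symmetric]
  proof (rule Max_eqI)
    show "finite ((\<lambda>e. \<Sum>i<n. e i) ` {e \<in> exp_box n CARD('a). c e \<noteq> 0})"
      using finite_exp_box by simp
    show "\<And>y. y \<in> (\<lambda>e. \<Sum>i<n. e i) ` {e \<in> exp_box n CARD('a). c e \<noteq> 0} \<Longrightarrow> y \<le> n * (CARD('a) - 2)"
      using bound by auto
    have "(\<Sum>i<n. estar i) = n * (CARD('a) - 2)" by (simp add: estar_def)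
    thus "n * (CARD('a) - 2) \<in> (\<lambda>e. \<Sum>i<n. e i) ` {e \<in> exp_box n CARD('a). c e \<noteq> 0}"
      using es_box ces by (metis (mono_tags, lifting) image_eqI mem_Collect_eq)
  qed
  show ?thesis using red rng lpp deg by blast
qed

end
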